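(* Let $N\ge 1$, let $\lambda_1,\dots,\lambda_N>0$, let $\mathbf{D}=\mathrm{diag}(\lambda_1,\dots,\lambda_N)$, and let $\mathbf{C}$ be an $N\times N$ symmetric positive definite matrix with all diagonal entries equal to $1$. Then the eigenvalues $\hat\lambda_1,\dots,\hat\lambda_N$ of $\mathbf{A}=\mathbf{D}\mathbf{C}$ are real and positive, and the vector $\hat{\boldsymbol\lambda}=(\hat\lambda_1,\dots,\hat\lambda_N)$ majorizes $\boldsymbol\lambda=(\lambda_1,\dots,\lambda_N)$, i.e. $\hat{\boldsymbol\lambda}\succ\boldsymbol\lambda$. *)

theory Defs
  imports "Jordan_Normal_Form.Matrix" "Jordan_Normal_Form.Char_Poly"
begin

definition pos_def_mat :: "real mat \<Rightarrow> bool" where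
  "pos_def_mat C \<longleftrightarrow> square_mat C \<and> C\<^sup>T = C \<and>
     (\<forall>x \<in> carrier_vec (dim_row C). x \<noteq> 0\<^sub>v (dim_row C) \<longrightarrow> x \<bullet> (C *\<^sub>v x) > 0)"

definition majorizes :: "real list \<Rightarrow> real list \<Rightarrow> bool" where
  "majorizes x y \<longleftrightarrow> length x = length y \<and> sum_list x = sum_list y \<and>
     (\<forall>k \<le> length x. sum_list (take k (rev (sort y))) \<le> sum_list (take k (rev (sort x))))"

end

theory Submission
  imports Defs "Jordan_Normal_Form.Spectral_Radius" "HOL-Combinatorics.Permutations"
begin


lemma quad_gen: assumes X: "X \<in> carrier_mat n n" and C: "C \<in> carrier_mat n n"
  and Y: "Y \<in> carrier_mat n n" and i: "i < n" and j: "j < n"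
  shows "(X\<^sup>T * C * Y) $$ (i,j) = col X i \<bullet> (C *\<^sub>v col Y j)"
proof -
  have Xt: "X\<^sup>T \<in> carrier_mat n n" using X by simp
  have "X\<^sup>T * C * Y = X\<^sup>T * (C * Y)" by (rule assoc_mult_mat[OF Xt C Y])
  hence "(X\<^sup>T * C * Y) $$ (i,j) = row X\<^sup>T i \<bullet> col (C * Y) j"
    using index_mult_mat(1)[of i "X\<^sup>T" j "C * Y"] Xt C Y i j by simp
  also have "col (C * Y) j = C *\<^sub>v col Y j" by (rule col_mult2[OF C Y j])
  also have "row X\<^sup>T i = col X i" using X i by simp
  finally show ?thesis .
qed

lemma real_sym_eigen:
  fixes S :: "real mat"
  assumes S: "S \<in> carrier_mat n n" and sym: "S\<^sup>T = S" and n: "n > 0"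
  shows "\<exists>v e. v \<in> carrier_vec n \<and> v \<bullet> v = 1 \<and> S *\<^sub>v v = e \<cdot>\<^sub>v v"
proof -
  let ?Sc = "map_mat complex_of_real S"
  have Sc: "?Sc \<in> carrier_mat n n" using S by simp
  from spectrum_non_empty[OF Sc n] obtain z where "eigenvalue ?Sc z" unfolding spectrum_def by auto
  then obtain v where ev: "eigenvector ?Sc v z" unfolding eigenvalue_def by auto
  hence v: "v \<in> carrier_vec n" and v0: "v \<noteq> 0\<^sub>v n" and eq: "?Sc *\<^sub>v v = z \<cdot>\<^sub>v v"
    using S unfolding eigenvector_def by auto
  define q where "q = (\<Sum>i<n. \<Sum>j<n. cnj (v$i) * of_real (S$$(i,j)) * v$j)"
  define rr where "rr = (\<Sum>i<n. (cmod (v$i))^2)"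
  have rr: "complex_of_real rr = (\<Sum>i<n. cnj (v$i) * v$i)"
    unfolding rr_def of_real_sum complex_norm_square by (simp add: mult.commute)
  have qz: "q = z * of_real rr"
  proof -
    have "q = (\<Sum>i<n. cnj (v$i) * (?Sc *\<^sub>v v)$i)"
      unfolding q_def using S v
      by (auto simp: mult_mat_vec_def scalar_prod_def sum_distrib_left mult.assoc atLeast0LessThan intro!: sum.cong)
    also have "\<dots> = z * of_real rr" using eq v unfolding rr
      by (simp add: sum_distrib_left algebra_simps)
    finally show ?thesis .
  qed
  have symS: "\<And>i j. i < n \<Longrightarrow> j < n \<Longrightarrow> S$$(j,i) = S$$(i,j)"
    using sym S by (metis carrier_matD index_transpose_mat(1))
  have qr: "cnj q = q"
  proof -
    have "cnj q = (\<Sum>i<n. \<Sum>j<n. v$i * of_real (S$$(i,j)) * cnj (v$j))"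
      unfolding q_def by simp
    also have "\<dots> = (\<Sum>j<n. \<Sum>i<n. v$i * of_real (S$$(i,j)) * cnj (v$j))"
      by (rule sum.swap)
    also have "\<dots> = q" unfolding q_def
      by (intro sum.cong refl, simp add: symS mult.commute mult.left_commute)
    finally show ?thesis .
  qed
  have rpos: "rr > 0"
  proof -
    obtain i where i: "i < n" "v$i \<noteq> 0" using v v0 by (metis eq_vecI carrier_vecD index_zero_vec)
    have "rr \<ge> (cmod (v$i))^2" unfolding rr_def
      by (rule member_le_sum, insert i, auto)
    moreover have "(cmod (v$i))^2 > 0" using i by simp
    ultimately show ?thesis by linarith
  qed
  have "cnj z = z"
  proof -
    have "z = q / of_real rr" using qz rpos by simp
    hence "cnj z = cnj q / of_real rr" by simp
    thus ?thesis using qr \<open>z = q / of_real rr\<close> by simp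
  qed
  hence zr: "z = of_real (Re z)" using Reals_cnj_iff of_real_Re by metis
  have "poly (char_poly ?Sc) z = 0" using eigenvalue_root_char_poly[OF Sc] \<open>eigenvalue ?Sc z\<close> by auto
  hence "poly (map_poly complex_of_real (char_poly S)) (of_real (Re z)) = 0"
    using of_real_hom.char_poly_hom[OF S] zr by metis
  hence "poly (char_poly S) (Re z) = 0"
    by (metis of_real_eq_0_iff of_real_hom.poly_map_poly)
  hence "eigenvalue S (Re z)" using eigenvalue_root_char_poly[OF S] by auto
  then obtain w where "eigenvector S w (Re z)" unfolding eigenvalue_def by auto
  hence w: "w \<in> carrier_vec n" and w0: "w \<noteq> 0\<^sub>v n" and weq: "S *\<^sub>v w = Re z \<cdot>\<^sub>v w"
    using S unfolding eigenvector_def by auto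
  have wpos: "w \<bullet> w > 0" using conjugate_square_greater_0_vec[OF w] w0 by simp
  define u where "u = (1 / sqrt (w \<bullet> w)) \<cdot>\<^sub>v w"
  have u: "u \<in> carrier_vec n" unfolding u_def using w by simp
  have "u \<bullet> u = (1 / sqrt (w \<bullet> w))^2 * (w \<bullet> w)" unfolding u_def using w
    by (simp add: power2_eq_square)
  also have "\<dots> = 1" using wpos by (simp add: power_divide)
  finally have uu: "u \<bullet> u = 1" .
  have "S *\<^sub>v u = Re z \<cdot>\<^sub>v u" unfolding u_def using w S weq
    by (simp add: mult_mat_vec smult_smult_assoc mult.commute)
  thus ?thesis using u uu by blast
qed



lemma orthonormal_completion:
  fixes v :: "real vec"
  assumes v: "v \<in> carrier_vec n" and vv: "v \<bullet> v = 1"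
  shows "\<exists>W. W \<in> carrier_mat n n \<and> W\<^sup>T * W = 1\<^sub>m n \<and> col W 0 = v"
proof -
  interpret cof_vec_space n "TYPE(real)" .
  have v0: "v \<noteq> 0\<^sub>v n" using vv v by auto
  define b where "b = basis_completion v"
  define ws where "ws = gram_schmidt n b"
  from basis_completion[OF v v0, folded b_def]
  have dist_b: "distinct b" and indep: "\<not> lin_dep (set b)" and b: "set b \<subseteq> carrier_vec n"
    and hdb: "hd b = v" and len_b: "length b = n" by auto
  have n: "n > 0"
  proof (rule ccontr)
    assume "\<not> n > 0"
    hence "v = 0\<^sub>v n" using v by (intro eq_vecI, auto)
    thus False using v0 by simp
  qed
  from hdb len_b n obtain vs where bv: "b = v # vs" by (cases b, auto)
  from gram_schmidt_result[OF b dist_b indep refl, folded ws_def]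
  have wsc: "set ws \<subseteq> carrier_vec n" and orth: "corthogonal ws" and lenw: "length ws = n"
    by (auto simp: len_b)
  from gram_schmidt_hd[OF v, of vs, folded bv] have hdws: "hd ws = v" unfolding ws_def .
  have ws0: "ws ! 0 = v" using hdws n lenw by (cases ws, auto)
  have wc: "\<And>i. i < n \<Longrightarrow> ws ! i \<in> carrier_vec n" using wsc lenw by auto
  have worth: "\<And>i j. i < n \<Longrightarrow> j < n \<Longrightarrow> ws ! i \<bullet> ws ! j = 0 \<longleftrightarrow> i \<noteq> j"
    using orth lenw unfolding corthogonal_def by simp
  define us where "us = map (\<lambda>w. (1 / sqrt (w \<bullet> w)) \<cdot>\<^sub>v w) ws"
  have lenu: "length us = n" unfolding us_def using lenw by simp
  have uc: "set us \<subseteq> carrier_vec n" unfolding us_def using wsc by auto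
  have uu: "us ! i \<bullet> us ! j = (if i = j then 1 else 0)" if i: "i < n" and j: "j < n" for i j
  proof -
    have ui: "us ! i = (1 / sqrt (ws!i \<bullet> ws!i)) \<cdot>\<^sub>v ws ! i" unfolding us_def using i lenw by simp
    have uj: "us ! j = (1 / sqrt (ws!j \<bullet> ws!j)) \<cdot>\<^sub>v ws ! j" unfolding us_def using j lenw by simp
    have "us ! i \<bullet> us ! j = (1 / sqrt (ws!i \<bullet> ws!i)) * (1 / sqrt (ws!j \<bullet> ws!j)) * (ws ! i \<bullet> ws ! j)"
      unfolding ui uj using wc[OF i] wc[OF j] by simp
    moreover have "ws!i \<bullet> ws!i > 0"
      using worth[OF i i] conjugate_square_ge_0_vec[of "ws!i"] by (simp add: less_le)
    ultimately show ?thesis using worth[OF i j]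
      by (cases "i = j", auto simp: real_sqrt_mult[symmetric])
  qed
  define W where "W = mat_of_cols n us"
  have W: "W \<in> carrier_mat n n" unfolding W_def using mat_of_cols_carrier(1)[of n us] lenu by simp
  have uci: "\<And>i. i < n \<Longrightarrow> us ! i \<in> carrier_vec n" using uc lenu by auto
  have "W\<^sup>T * W = 1\<^sub>m n"
    by (rule eq_matI, insert W uu lenu uci, auto simp: W_def)
  moreover have "col W 0 = v"
  proof -
    have "col W 0 = us ! 0" unfolding W_def using n lenu uci[OF n] by simp
    also have "\<dots> = v" unfolding us_def using n lenw ws0 vv by simp
    finally show ?thesis .
  qed
  ultimately show ?thesis using W by blast
qed

definition dg :: "real list \<Rightarrow> real mat" where
  "dg mu = mat (length mu) (length mu) (\<lambda>(i,j). if i = j then mu ! i else 0)"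

lemma spectral:
  fixes S :: "real mat"
  assumes "S \<in> carrier_mat n n" and "S\<^sup>T = S"
  shows "\<exists>U mu. U \<in> carrier_mat n n \<and> U\<^sup>T * U = 1\<^sub>m n \<and> length mu = n \<and> U\<^sup>T * S * U = dg mu"
  using assms
proof (induction n arbitrary: S)
  case 0
  show ?case
    by (rule exI[of _ "1\<^sub>m 0"], rule exI[of _ "[]"], insert 0, auto intro!: eq_matI simp: dg_def)
next
  case (Suc m S)
  let ?n = "Suc m"
  have S: "S \<in> carrier_mat ?n ?n" and sym: "S\<^sup>T = S" using Suc by auto
  from real_sym_eigen[OF S sym] obtain v e where v: "v \<in> carrier_vec ?n" and vv: "v \<bullet> v = 1"
    and ev: "S *\<^sub>v v = e \<cdot>\<^sub>v v" by auto
  from orthonormal_completion[OF v vv] obtain W where W: "W \<in> carrier_mat ?n ?n"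
    and WW: "W\<^sup>T * W = 1\<^sub>m ?n" and W0: "col W 0 = v" by auto
  define M where "M = W\<^sup>T * S * W"
  have M: "M \<in> carrier_mat ?n ?n" unfolding M_def using W S by auto
  have Mt: "M\<^sup>T = M"
  proof -
    have WS: "W\<^sup>T * S \<in> carrier_mat ?n ?n" using W S by simp
    have "M\<^sup>T = W\<^sup>T * (W\<^sup>T * S)\<^sup>T" unfolding M_def
      using transpose_mult[OF WS W] by simp
    also have "(W\<^sup>T * S)\<^sup>T = S\<^sup>T * W" using transpose_mult[of "W\<^sup>T" ?n ?n S ?n] W S by simp
    also have "W\<^sup>T * (S\<^sup>T * W) = M" unfolding M_def sym
      using W S by (simp add: assoc_mult_mat[of _ ?n ?n _ ?n _ ?n])
    finally show ?thesis .
  qed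
  have Mcol: "M $$ (i, 0) = (if i = 0 then e else 0)" if i: "i < ?n" for i
  proof -
    have "M $$ (i, 0) = col W i \<bullet> (S *\<^sub>v v)"
      using quad_gen[OF W S W i zero_less_Suc] W0 unfolding M_def by simp
    also have "\<dots> = e * (col W i \<bullet> col W 0)" using ev W0 W v by simp
    also have "col W i \<bullet> col W 0 = (W\<^sup>T * W) $$ (i, 0)" using W i by simp
    also have "\<dots> = (if i = 0 then 1 else 0)" unfolding WW using i by simp
    finally show ?thesis by simp
  qed
  have Mrow: "M $$ (0, j) = (if j = 0 then e else 0)" if j: "j < ?n" for j
    using Mcol[OF j] Mt M j by (metis carrier_matD index_transpose_mat(1) zero_less_Suc)
  define S' where "S' = mat m m (\<lambda>(i,j). M $$ (Suc i, Suc j))"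
  have S': "S' \<in> carrier_mat m m" unfolding S'_def by simp
  have S't: "S'\<^sup>T = S'" unfolding S'_def
    by (rule eq_matI, insert Mt M, auto, metis carrier_matD index_transpose_mat(1) Suc_less_eq)
  from Suc.IH[OF S' S't] obtain U' mu' where U': "U' \<in> carrier_mat m m" and UU': "U'\<^sup>T * U' = 1\<^sub>m m"
    and lmu: "length mu' = m" and diag': "U'\<^sup>T * S' * U' = dg mu'" by auto
  define B where "B = four_block_mat (1\<^sub>m 1) (0\<^sub>m 1 m) (0\<^sub>m m 1) U'"
  have B: "B \<in> carrier_mat ?n ?n" using U' unfolding B_def carrier_mat_def by simp
  have U't: "U'\<^sup>T \<in> carrier_mat m m" using U' by simp
  have O1: "(1\<^sub>m 1 :: real mat) \<in> carrier_mat 1 1" by simp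
  have Z1: "(0\<^sub>m 1 m :: real mat) \<in> carrier_mat 1 m" by simp
  have Z2: "(0\<^sub>m m 1 :: real mat) \<in> carrier_mat m 1" by simp
  have E: "mat 1 1 (\<lambda>_. e) \<in> carrier_mat 1 1" by simp
  have Bt: "B\<^sup>T = four_block_mat (1\<^sub>m 1) (0\<^sub>m 1 m) (0\<^sub>m m 1) U'\<^sup>T"
    unfolding B_def using transpose_four_block_mat[OF O1 Z1 Z2 U'] by simp
  have Mblock: "M = four_block_mat (mat 1 1 (\<lambda>_. e)) (0\<^sub>m 1 m) (0\<^sub>m m 1) S'"
    by (rule eq_matI, insert M Mcol Mrow, auto simp: S'_def)
  define U where "U = W * B"
  have U: "U \<in> carrier_mat ?n ?n" unfolding U_def using W B by simp
  have Ut: "U\<^sup>T = B\<^sup>T * W\<^sup>T" unfolding U_def using W B by (simp add: transpose_mult)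
  have "U\<^sup>T * U = B\<^sup>T * (W\<^sup>T * W) * B" unfolding Ut unfolding U_def using W B
    by (simp add: assoc_mult_mat[of _ ?n ?n _ ?n _ ?n])
  also have "\<dots> = B\<^sup>T * B" unfolding WW using B by simp
  also have "\<dots> = 1\<^sub>m ?n" unfolding Bt unfolding B_def
    using mult_four_block_mat[OF O1 Z1 Z2 U't
      O1 Z1 Z2 U'] U' UU' U't by simp
  finally have UU: "U\<^sup>T * U = 1\<^sub>m ?n" .
  have "U\<^sup>T * S * U = B\<^sup>T * M * B" unfolding Ut unfolding U_def M_def using W B S
    by (simp add: assoc_mult_mat[of _ ?n ?n _ ?n _ ?n])
  also have "\<dots> = four_block_mat (mat 1 1 (\<lambda>_. e)) (0\<^sub>m 1 m) (0\<^sub>m m 1) (U'\<^sup>T * S' * U')"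
  proof -
    have "B\<^sup>T * M = four_block_mat (mat 1 1 (\<lambda>_. e)) (0\<^sub>m 1 m) (0\<^sub>m m 1) (U'\<^sup>T * S')"
      unfolding Bt unfolding Mblock
      using mult_four_block_mat[OF O1 Z1 Z2 U't
        E Z1 Z2 S'] U't S' E by simp
    also have "\<dots> * B = four_block_mat (mat 1 1 (\<lambda>_. e)) (0\<^sub>m 1 m) (0\<^sub>m m 1) (U'\<^sup>T * S' * U')"
      unfolding B_def
      using mult_four_block_mat[OF E Z1 Z2 mult_carrier_mat[OF U't S']
        O1 Z1 Z2 U'] U't S' E U' by simp
    finally show ?thesis .
  qed
  also have "\<dots> = dg (e # mu')" unfolding diag'
    by (rule eq_matI, auto simp: dg_def lmu)
  finally show ?case using U UU lmu by (intro exI[of _ U] exI[of _ "e # mu'"], auto)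
qed



lemma sorted_weighted:
  fixes ys :: "nat \<Rightarrow> real" and w :: "nat \<Rightarrow> real"
  assumes mono: "\<And>i j. i \<le> j \<Longrightarrow> j < n \<Longrightarrow> ys j \<le> ys i"
    and w01: "\<And>j. j < n \<Longrightarrow> 0 \<le> w j \<and> w j \<le> 1"
    and ws: "(\<Sum>j<n. w j) = real k" and kn: "k \<le> n"
  shows "(\<Sum>j<n. w j * ys j) \<le> (\<Sum>j<k. ys j)"
proof (cases "n = 0")
  case True thus ?thesis using kn by simp
next
  case False
  define c where "c = ys (min k (n - 1))"
  define e where "e = (\<lambda>j. if j < k then 1 else (0::real))"
  have ek: "(\<Sum>j<k. ys j) = (\<Sum>j<n. e j * ys j)"
  proof -
    have "(\<Sum>j<n. e j * ys j) = (\<Sum>j<k. e j * ys j)"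
      by (rule sum.mono_neutral_right, insert kn, auto simp: e_def)
    thus ?thesis by (simp add: e_def)
  qed
  have esum: "(\<Sum>j<n. e j) = real k"
  proof -
    have "(\<Sum>j<n. e j) = (\<Sum>j<k. e j)"
      by (rule sum.mono_neutral_right, insert kn, auto simp: e_def)
    thus ?thesis by (simp add: e_def)
  qed
  have pt: "(w j - e j) * ys j \<le> (w j - e j) * c" if j: "j < n" for j
  proof (cases "j < k")
    case True
    have "j \<le> min k (n - 1)" using True j by simp
    hence "c \<le> ys j" unfolding c_def using mono False by simp
    moreover have "w j - e j \<le> 0" using w01[OF j] True unfolding e_def by simp
    ultimately show ?thesis by (simp add: mult_left_mono_neg)
  next
    case False
    hence "min k (n - 1) = k" using j by simp
    hence "ys j \<le> c" unfolding c_def using mono[of k j] False j by simp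
    moreover have "w j - e j \<ge> 0" using w01[OF j] False unfolding e_def by simp
    ultimately show ?thesis by (simp add: mult_left_mono)
  qed
  have "(\<Sum>j<n. w j * ys j) - (\<Sum>j<k. ys j) = (\<Sum>j<n. (w j - e j) * ys j)"
    unfolding ek by (simp add: sum_subtractf left_diff_distrib)
  also have "\<dots> \<le> (\<Sum>j<n. (w j - e j) * c)" by (rule sum_mono, rule pt, simp)
  also have "\<dots> = ((\<Sum>j<n. w j) - (\<Sum>j<n. e j)) * c"
    by (simp add: sum_distrib_right sum_subtractf left_diff_distrib)
  also have "\<dots> = 0" using ws esum by simp
  finally show ?thesis by simp
qed

lemma sort_perm:
  fixes xs :: "real list"
  shows "\<exists>p. p permutes {..<length xs} \<and> (\<forall>j<length xs. rev (sort xs) ! j = xs ! p j)"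
proof -
  have "mset (rev (sort xs)) = mset xs" by (simp only: mset_rev mset_sort)
  then obtain p where p: "p permutes {..<length xs}"
    and pl: "permute_list p xs = rev (sort xs)" by (rule mset_eq_permutation)
  show ?thesis
  proof (intro exI[of _ p] conjI allI impI)
    show "p permutes {..<length xs}" by (rule p)
    fix j assume "j < length xs"
    hence "permute_list p xs ! j = xs ! p j" by (rule permute_list_nth[OF p])
    thus "rev (sort xs) ! j = xs ! p j" unfolding pl .
  qed
qed

lemma take_sum_nth: "k \<le> length ys \<Longrightarrow> sum_list (take k ys) = (\<Sum>j<k. ys ! j)"
  by (simp add: sum_list_sum_nth atLeast0LessThan min_absorb1)

lemma rev_sort_mono:
  fixes xs :: "real list"
  assumes "i \<le> j" "j < length xs"
  shows "rev (sort xs) ! j \<le> rev (sort xs) ! i"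
proof -
  let ?n = "length xs"
  have "sort xs ! (?n - 1 - j) \<le> sort xs ! (?n - 1 - i)"
    by (rule sorted_nth_mono, insert assms, auto)
  thus ?thesis using assms by (simp add: rev_nth)
qed

lemma top_sum_set:
  fixes xs :: "real list"
  assumes k: "k \<le> length xs"
  shows "\<exists>I. I \<subseteq> {..<length xs} \<and> card I = k \<and> sum_list (take k (rev (sort xs))) = (\<Sum>i\<in>I. xs ! i)"
proof -
  from sort_perm[of xs] obtain p where p: "p permutes {..<length xs}"
    and pj': "\<forall>j<length xs. rev (sort xs) ! j = xs ! p j" by blast
  have inj: "inj_on p {..<k}" by (rule permutes_inj_on[OF p])
  have "sum_list (take k (rev (sort xs))) = (\<Sum>j<k. rev (sort xs) ! j)"
    by (rule take_sum_nth, simp add: k)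
  also have "\<dots> = (\<Sum>j<k. xs ! p j)"
  proof (rule sum.cong[OF refl])
    fix j assume "j \<in> {..<k}"
    hence "j < length xs" using k by simp
    thus "rev (sort xs) ! j = xs ! p j" using pj' by blast
  qed
  also have "\<dots> = (\<Sum>i\<in>p ` {..<k}. xs ! i)" by (rule sym, rule sum.reindex_cong[OF inj refl], simp)
  finally have eq: "sum_list (take k (rev (sort xs))) = (\<Sum>i\<in>p ` {..<k}. xs ! i)" .
  have sub: "p ` {..<k} \<subseteq> {..<length xs}"
  proof
    fix i assume "i \<in> p ` {..<k}"
    then obtain j where j: "j < k" and ij: "i = p j" by blast
    have "j \<in> {..<length xs}" using j k by simp
    hence "p j \<in> {..<length xs}" using permutes_in_image[OF p] by blast
    thus "i \<in> {..<length xs}" using ij by simp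
  qed
  have c: "card (p ` {..<k}) = k" using card_image[OF inj] by simp
  show ?thesis by (rule exI[of _ "p ` {..<k}"], intro conjI sub c eq)
qed

lemma weighted_top:
  fixes xs :: "real list" and w :: "nat \<Rightarrow> real"
  assumes w01: "\<And>j. j < length xs \<Longrightarrow> 0 \<le> w j \<and> w j \<le> 1"
    and ws: "(\<Sum>j<length xs. w j) = real k" and kn: "k \<le> length xs"
  shows "(\<Sum>j<length xs. w j * xs ! j) \<le> sum_list (take k (rev (sort xs)))"
proof -
  let ?n = "length xs"
  from sort_perm[of xs] obtain p where p: "p permutes {..<?n}"
    and pj': "\<forall>j<?n. rev (sort xs) ! j = xs ! p j" by blast
  have pj: "\<And>j. j < ?n \<Longrightarrow> rev (sort xs) ! j = xs ! p j" using pj' by blast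
  have reidx: "(\<Sum>j<?n. f j) = (\<Sum>j<?n. f (p j))" for f :: "nat \<Rightarrow> real"
    using sum.reindex_bij_betw[OF permutes_imp_bij[OF p], of f] by simp
  have "(\<Sum>j<?n. w j * xs ! j) = (\<Sum>j<?n. w (p j) * rev (sort xs) ! j)"
    using reidx[of "\<lambda>j. w j * xs ! j"] by (simp add: pj)
  also have "\<dots> \<le> (\<Sum>j<k. rev (sort xs) ! j)"
  proof (rule sorted_weighted[where n = ?n])
    show "\<And>i j. i \<le> j \<Longrightarrow> j < ?n \<Longrightarrow> rev (sort xs) ! j \<le> rev (sort xs) ! i"
      by (rule rev_sort_mono)
    show "\<And>j. j < ?n \<Longrightarrow> 0 \<le> w (p j) \<and> w (p j) \<le> 1"
      using w01 permutes_in_image[OF p] by auto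
    show "(\<Sum>j<?n. w (p j)) = real k" using reidx[of w] ws by simp
  qed (rule kn)
  also have "\<dots> = sum_list (take k (rev (sort xs)))" using kn by (simp add: take_sum_nth)
  finally show ?thesis .
qed
lemma dg_carrier[simp]: "dg a \<in> carrier_mat (length a) (length a)"
  unfolding dg_def by simp

lemma mk_diagonal_dg: "mk_diagonal xs = dg xs"
proof (induction xs)
  case Nil
  show ?case by (rule eq_matI, auto simp: mk_diagonal_def dg_def)
next
  case (Cons a xs)
  have "mk_diagonal (a # xs) = four_block_mat (mat 1 1 (\<lambda>_. a)) (0\<^sub>m 1 (length xs)) (0\<^sub>m (length xs) 1) (dg xs)"
    using Cons.IH mk_diagonal_dim[of xs] unfolding mk_diagonal_def by (simp add: Let_def)
  also have "\<dots> = dg (a # xs)"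
    by (rule eq_matI, auto simp: dg_def nth_Cons')
  finally show ?case .
qed

lemma dg_mult_left: assumes A: "A \<in> carrier_mat n m" and a: "length a = n"
  shows "dg a * A = mat n m (\<lambda>(i,j). a ! i * A $$ (i,j))"
proof (rule eq_matI)
  fix i j assume i: "i < dim_row (mat n m (\<lambda>(i,j). a ! i * A $$ (i,j)))"
    and j: "j < dim_col (mat n m (\<lambda>(i,j). a ! i * A $$ (i,j)))"
  hence i: "i < n" and j: "j < m" by auto
  have "(dg a * A) $$ (i,j) = (\<Sum>k\<in>{0..<n}. (if i = k then a ! i else 0) * A $$ (k, j))"
    using A a i j by (simp add: dg_def scalar_prod_def)
  also have "\<dots> = (\<Sum>k\<in>{0..<n}. if i = k then a ! i * A $$ (k, j) else 0)"
    by (rule sum.cong, auto)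
  also have "\<dots> = a ! i * A $$ (i,j)" using i by simp
  finally show "(dg a * A) $$ (i,j) = mat n m (\<lambda>(i,j). a ! i * A $$ (i,j)) $$ (i,j)" using i j by simp
qed (insert A a, auto simp: dg_def)

lemma dg_mult_right: assumes A: "A \<in> carrier_mat n m" and a: "length a = m"
  shows "A * dg a = mat n m (\<lambda>(i,j). A $$ (i,j) * a ! j)"
proof (rule eq_matI)
  fix i j assume i: "i < dim_row (mat n m (\<lambda>(i,j). A $$ (i,j) * a ! j))"
    and j: "j < dim_col (mat n m (\<lambda>(i,j). A $$ (i,j) * a ! j))"
  hence i: "i < n" and j: "j < m" by auto
  have "(A * dg a) $$ (i,j) = (\<Sum>k\<in>{0..<m}. A $$ (i, k) * (if k = j then a ! k else 0))"
    using A a i j by (simp add: dg_def scalar_prod_def)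
  also have "\<dots> = (\<Sum>k\<in>{0..<m}. if j = k then A $$ (i, j) * a ! j else 0)"
    by (rule sum.cong, auto)
  also have "\<dots> = A $$ (i,j) * a ! j" using j by simp
  finally show "(A * dg a) $$ (i,j) = mat n m (\<lambda>(i,j). A $$ (i,j) * a ! j) $$ (i,j)" using i j by simp
qed (insert A a, auto simp: dg_def)

lemma quad_diag: assumes X: "X \<in> carrier_mat n n" and C: "C \<in> carrier_mat n n" and j: "j < n"
  shows "(X\<^sup>T * C * X) $$ (j,j) = col X j \<bullet> (C *\<^sub>v col X j)"
  by (rule quad_gen[OF X C X j j])

lemma char_poly_dg: "char_poly (dg mu) = (\<Prod>a \<leftarrow> mu. [:- a, 1:])"
proof -
  have "upper_triangular (dg mu)" unfolding dg_def upper_triangular_def by auto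
  have "diag_mat (dg mu) = mu" unfolding diag_mat_def dg_def by (rule nth_equalityI, auto)
  with char_poly_upper_triangular[OF dg_carrier \<open>upper_triangular (dg mu)\<close>]
  show ?thesis by simp
qed

theorem mainTheorem1:
  fixes lam :: "real list" and C :: "real mat" and N :: nat
  assumes "N \<ge> 1"
    and "length lam = N"
    and "\<forall>l \<in> set lam. l > 0"
    and "C \<in> carrier_mat N N"
    and "pos_def_mat C"
    and "\<forall>i < N. C $$ (i, i) = 1"
  shows "\<exists>mu :: real list. length mu = N \<and>
           char_poly (map_mat complex_of_real (mk_diagonal lam * C))
             = (\<Prod>a \<leftarrow> mu. [:- complex_of_real a, 1:]) \<and>
           (\<forall>a \<in> set mu. a > 0) \<and>
           majorizes mu lam"
proof -
  note lenl = assms(2)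
  have lpos: "\<And>i. i < N \<Longrightarrow> lam ! i > 0" using assms(3) lenl by auto
  have lpos2: "\<And>i. i < length lam \<Longrightarrow> lam ! i \<noteq> 0" using lpos lenl by force
  note Cc = assms(4)
  have Ct: "C\<^sup>T = C" and Cpos: "\<And>x. x \<in> carrier_vec N \<Longrightarrow> x \<noteq> 0\<^sub>v N \<Longrightarrow> x \<bullet> (C *\<^sub>v x) > 0"
    using assms(5) Cc unfolding pos_def_mat_def by auto
  have Csym: "\<And>i j. i < N \<Longrightarrow> j < N \<Longrightarrow> C $$ (j,i) = C $$ (i,j)"
    using Ct Cc by (metis carrier_matD index_transpose_mat(1))
  have C1: "\<And>i. i < N \<Longrightarrow> C $$ (i,i) = 1" using assms(6) by auto
  define r where "r = map sqrt lam"
  define ri where "ri = map (\<lambda>x. 1 / sqrt x) lam"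
  have lr: "length r = N" and lri: "length ri = N" unfolding r_def ri_def using lenl by auto
  define R where "R = dg r"
  define Ri where "Ri = dg ri"
  define D where "D = dg lam"
  have R: "R \<in> carrier_mat N N" and Ri: "Ri \<in> carrier_mat N N" and D: "D \<in> carrier_mat N N"
    unfolding R_def Ri_def D_def using lr lri lenl dg_carrier by metis+
  have Rt: "R\<^sup>T = R" unfolding R_def dg_def by (rule eq_matI, auto)
  have RRi: "R * Ri = 1\<^sub>m N" unfolding R_def using dg_mult_left[OF Ri lr] Ri lr lri
    by (intro eq_matI, auto simp: Ri_def dg_def r_def ri_def lpos lpos2)
  have RiR: "Ri * R = 1\<^sub>m N" unfolding Ri_def using dg_mult_left[OF R lri] R lr lri
    by (intro eq_matI, auto simp: R_def dg_def r_def ri_def lpos lpos2)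
  have RR: "R * R = D" unfolding R_def using dg_mult_left[OF R lr] R lr lenl
    by (intro eq_matI, auto simp: R_def dg_def r_def D_def lpos lpos2 less_imp_le)
  define S where "S = R * C * R"
  have S: "S \<in> carrier_mat N N" unfolding S_def using R Cc by simp
  have Sent: "S $$ (i,j) = r ! i * C $$ (i,j) * r ! j" if "i < N" "j < N" for i j
    unfolding S_def R_def using dg_mult_left[OF Cc lr] dg_mult_right[OF _ lr, of _ N] Cc that lr
    by simp
  have St: "S\<^sup>T = S"
    by (rule eq_matI, insert S, auto simp: Sent Csym)
  have Sdiag: "S $$ (i,i) = lam ! i" if "i < N" for i
    using Sent[OF that that] C1[OF that] lpos[OF that] that lenl
    by (simp add: r_def less_imp_le)
  from spectral[OF S St] obtain U mu where U: "U \<in> carrier_mat N N" and UU: "U\<^sup>T * U = 1\<^sub>m N"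
    and lmu: "length mu = N" and diag: "U\<^sup>T * S * U = dg mu" by auto
  have Ut: "U\<^sup>T \<in> carrier_mat N N" using U by simp
  have UU': "U * U\<^sup>T = 1\<^sub>m N" using mat_mult_left_right_inverse[OF Ut U UU] .
  have Sdec: "S = U * dg mu * U\<^sup>T"
  proof -
    have "U * dg mu * U\<^sup>T = (U * U\<^sup>T) * S * (U * U\<^sup>T)"
      unfolding diag[symmetric] using U S by (simp add: assoc_mult_mat[of _ N N _ N _ N])
    also have "\<dots> = S" unfolding UU' using S by simp
    finally show ?thesis by simp
  qed
  have DC: "D * C = R * S * Ri"
  proof -
    have "R * S * Ri = (R * R) * C * (R * Ri)" unfolding S_def using R Ri Cc
      by (simp add: assoc_mult_mat[of _ N N _ N _ N])
    thus ?thesis unfolding RR RRi using D Cc by simp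
  qed
  have "similar_mat (D * C) S"
    by (rule similar_matI[of _ _ R Ri N], insert R Ri S D Cc RRi RiR DC, auto)
  hence cp1: "char_poly (D * C) = char_poly S" by (rule char_poly_similar)
  have "similar_mat S (dg mu)"
    by (rule similar_matI[of _ _ U "U\<^sup>T" N], insert U Ut S UU UU' Sdec lmu dg_carrier[of mu], auto)
  hence cp2: "char_poly S = char_poly (dg mu)" by (rule char_poly_similar)
  have DCc: "D * C \<in> carrier_mat N N" using D Cc by simp
  have cpc: "char_poly (map_mat complex_of_real (mk_diagonal lam * C)) = (\<Prod>a \<leftarrow> mu. [:- complex_of_real a, 1:])"
  proof -
    have "char_poly (map_mat complex_of_real (mk_diagonal lam * C)) = map_poly complex_of_real (char_poly (D * C))"
      unfolding mk_diagonal_dg D_def[symmetric] using of_real_hom.char_poly_hom[OF DCc] by simp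
    also have "\<dots> = map_poly complex_of_real (\<Prod>a \<leftarrow> mu. [:- a, 1:])" unfolding cp1 cp2 char_poly_dg ..
    also have "\<dots> = (\<Prod>a \<leftarrow> mu. [:- complex_of_real a, 1:])"
    proof -
      interpret m: map_poly_comm_ring_hom "complex_of_real" ..
      show ?thesis by (simp add: m.hom_prod_list comp_def)
    qed
    finally show ?thesis .
  qed
  have mupos: "\<forall>a \<in> set mu. a > 0"
  proof
    fix a assume "a \<in> set mu"
    then obtain j where j: "j < N" and aj: "a = mu ! j" using lmu by (metis in_set_conv_nth)
    define V where "V = R * U"
    have V: "V \<in> carrier_mat N N" unfolding V_def using R U by simp
    have eqV: "U\<^sup>T * S * U = V\<^sup>T * C * V" unfolding V_def S_def
      using transpose_mult[OF R U] Rt R U Cc by (simp add: assoc_mult_mat[of _ N N _ N _ N])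
    have "mu ! j = (U\<^sup>T * S * U) $$ (j,j)" unfolding diag using j lmu by (simp add: dg_def)
    also have "\<dots> = (V\<^sup>T * C * V) $$ (j,j)" unfolding eqV ..
    also have "\<dots> = col V j \<bullet> (C *\<^sub>v col V j)" by (rule quad_diag[OF V Cc j])
    finally have "mu ! j = col V j \<bullet> (C *\<^sub>v col V j)" .
    moreover have "col V j \<noteq> 0\<^sub>v N"
    proof
      assume c0: "col V j = 0\<^sub>v N"
      have cu: "col U j \<in> carrier_vec N" using col_dim[of U j] U by simp
      have "col V j = R *\<^sub>v col U j" unfolding V_def by (rule col_mult2[OF R U j])
      hence "Ri *\<^sub>v col V j = (Ri * R) *\<^sub>v col U j" using assoc_mult_mat_vec[OF Ri R cu] by simp
      hence "col U j = Ri *\<^sub>v col V j" unfolding RiR using cu by simp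
      also have "\<dots> = 0\<^sub>v N" unfolding c0 using Ri by (intro eq_vecI, auto)
      finally have "col U j = 0\<^sub>v N" .
      moreover have "col U j \<bullet> col U j = 1" using arg_cong[OF UU, of "\<lambda>M. M $$ (j,j)"] U j by simp
      ultimately show False by simp
    qed
    moreover have "col V j \<in> carrier_vec N" using col_dim[of V j] V by simp
    ultimately show "a > 0" unfolding aj using Cpos by simp
  qed
  define P where "P = (\<lambda>i j. (U $$ (i,j))^2)"
  have Pnn: "\<And>i j. P i j \<ge> 0" unfolding P_def by simp
  have lamP: "lam ! i = (\<Sum>j<N. P i j * mu ! j)" if i: "i < N" for i
  proof -
    have "lam ! i = (U * dg mu * U\<^sup>T) $$ (i,i)" using Sdiag[OF i] Sdec by simp
    also have "\<dots> = (\<Sum>j<N. P i j * mu ! j)"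
      unfolding dg_mult_right[OF U lmu] using U i
      by (simp add: scalar_prod_def P_def power2_eq_square atLeast0LessThan algebra_simps)
    finally show ?thesis .
  qed
  have rowP: "(\<Sum>j<N. P i j) = 1" if i: "i < N" for i
    using arg_cong[OF UU', of "\<lambda>M. M $$ (i,i)"] U i
    by (simp add: scalar_prod_def P_def power2_eq_square atLeast0LessThan)
  have colP: "(\<Sum>i<N. P i j) = 1" if j: "j < N" for j
    using arg_cong[OF UU, of "\<lambda>M. M $$ (j,j)"] U j
    by (simp add: scalar_prod_def P_def power2_eq_square atLeast0LessThan)
  have sumeq: "sum_list mu = sum_list lam"
  proof -
    have "sum_list lam = (\<Sum>i<N. \<Sum>j<N. P i j * mu ! j)"
      using lenl lamP by (simp add: sum_list_sum_nth atLeast0LessThan)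
    also have "\<dots> = (\<Sum>j<N. (\<Sum>i<N. P i j) * mu ! j)"
      by (subst sum.swap, simp add: sum_distrib_right)
    also have "\<dots> = (\<Sum>j<N. mu ! j)" using colP by simp
    also have "\<dots> = sum_list mu" using lmu by (simp add: sum_list_sum_nth atLeast0LessThan)
    finally show ?thesis by simp
  qed
  have topk: "sum_list (take k (rev (sort lam))) \<le> sum_list (take k (rev (sort mu)))"
    if k: "k \<le> N" for k
  proof -
    from top_sum_set[of k lam] k lenl obtain I where I: "I \<subseteq> {..<N}" and cI: "card I = k"
      and eq: "sum_list (take k (rev (sort lam))) = (\<Sum>i\<in>I. lam ! i)" by auto
    define w where "w = (\<lambda>j. \<Sum>i\<in>I. P i j)"
    have finI: "finite I" using I finite_subset by blast
    have "(\<Sum>i\<in>I. lam ! i) = (\<Sum>i\<in>I. \<Sum>j<N. P i j * mu ! j)"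
      using I lamP by (intro sum.cong, auto)
    also have "\<dots> = (\<Sum>j<N. w j * mu ! j)" unfolding w_def
      by (subst sum.swap, simp add: sum_distrib_right)
    also have "\<dots> \<le> sum_list (take k (rev (sort mu)))"
    proof -
      have w01: "0 \<le> w j \<and> w j \<le> 1" if j: "j < length mu" for j
      proof
        show "0 \<le> w j" unfolding w_def by (rule sum_nonneg, rule Pnn)
        have "w j \<le> (\<Sum>i<N. P i j)" unfolding w_def
          by (rule sum_mono2, insert I Pnn, auto)
        thus "w j \<le> 1" using colP[of j] j lmu by simp
      qed
      have "(\<Sum>j<N. w j) = (\<Sum>i\<in>I. \<Sum>j<N. P i j)" unfolding w_def by (rule sum.swap)
      also have "\<dots> = (\<Sum>i\<in>I. 1)" using I rowP by (intro sum.cong, auto)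
      also have "\<dots> = real k" using cI by simp
      finally have wsum: "(\<Sum>j<length mu. w j) = real k" using lmu by simp
      from weighted_top[OF w01 wsum] k lmu show ?thesis by simp
    qed
    finally show ?thesis unfolding eq .
  qed
  have "majorizes mu lam" unfolding majorizes_def using lmu lenl sumeq topk by auto
  thus ?thesis using lmu cpc mupos by blast
qed
end
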